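(* Let $G$ be a strategic game and $\phi=(\phi_1,\dots,\phi_n)$ with each $\phi_i$ a positive optimality condition for player $i$. Then the optimality operator $O_\phi$ is monotonic on the lattice of restrictions of $G$ ordered componentwise by inclusion.
   Context: Strategic game $G=(T_1,\dots,T_n,<_1,\dots,<_n)$ with arbitrary nonempty $T_i$, $<_i$ total linear order on $T=\prod_iT_i$, $\ge_i$ reflexive closure. Restrictions $S=(S_1,\dots,S_n)$, $S_i\subseteq T_i$, ordered by $S\subseteq S'$ iff $S_i\subseteq S'_i$ for all $i$. $\mathcal{L}_O$: first-order formulas from atoms $C(a)$, $a\ge^i_cb$ ($a,b,c$ variables or constant $o$) with $\neg,\wedge,\exists$. In an optimality model $(G,G',s)$ ($G'$ a restriction, $s\in T$) with assignment $\alpha$ ($o\mapsto s$): $C(x)$ iff $\alpha(x)_j\in G'_j$ for all $j$; $x\ge^i_zy$ iff $(\alpha(x)_i,\alpha(z)_{-i})\ge_i(\alpha(y)_i,\alpha(z)_{-i})$. An optimality condition for $i$ is a closed formula using only $\ge^i$; it is positive if every occurrence of $C(\cdot)$ lies under an even number of negation signs. $\phi_i(s_i,S)$ means $(G,S,s)\models\phi_i$ for a profile $s$ with $i$-th component $s_i$. Optimality operator: $O_\phi(S)=\prod_{i=1}^n\{s_i\in S_i:\phi_i(s_i,S)\}$. *)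

theory Defs
  imports "HOL-Library.FuncSet"
begin

text \<open>Players are 0..n-1. All strategies live in one type 'a; player i's strategy
  set is T i. A strategy profile is an element of PiE {..<n} T.
  ge i is the reflexive preference relation of player i on profiles:
  (p, q) \<in> ge i means p \<ge>_i q.\<close>

type_synonym 'a profile = "nat \<Rightarrow> 'a"

definition profiles :: "nat \<Rightarrow> (nat \<Rightarrow> 'a set) \<Rightarrow> 'a profile set" where
  "profiles n T = PiE {..<n} T"

definition strategic_game ::
  "nat \<Rightarrow> (nat \<Rightarrow> 'a set) \<Rightarrow> (nat \<Rightarrow> ('a profile \<times> 'a profile) set) \<Rightarrow> bool" where
  "strategic_game n T ge \<longleftrightarrow>
     (\<forall>i<n. T i \<noteq> {}) \<and> (\<forall>i<n. linear_order_on (profiles n T) (ge i))"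

definition restriction :: "nat \<Rightarrow> (nat \<Rightarrow> 'a set) \<Rightarrow> (nat \<Rightarrow> 'a set) \<Rightarrow> bool" where
  "restriction n T S \<longleftrightarrow> (\<forall>i<n. S i \<subseteq> T i)"

definition restr_le :: "nat \<Rightarrow> (nat \<Rightarrow> 'a set) \<Rightarrow> (nat \<Rightarrow> 'a set) \<Rightarrow> bool" where
  "restr_le n S S' \<longleftrightarrow> (\<forall>i<n. S i \<subseteq> S' i)"

text \<open>The language L_O. Terms: variables or the constant o.
  Ge i a b c encodes the atom  a \<ge>^i_c b.\<close>

datatype trm = V nat | Oc

datatype form =
    C trm
  | Ge nat trm trm trm
  | Neg form
  | Conj form form
  | Ex nat form

fun eval_trm :: "'a profile \<Rightarrow> (nat \<Rightarrow> 'a profile) \<Rightarrow> trm \<Rightarrow> 'a profile" where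
  "eval_trm s \<alpha> (V x) = \<alpha> x"
| "eval_trm s \<alpha> Oc = s"

fun sat :: "nat \<Rightarrow> (nat \<Rightarrow> 'a set) \<Rightarrow> (nat \<Rightarrow> ('a profile \<times> 'a profile) set)
            \<Rightarrow> (nat \<Rightarrow> 'a set) \<Rightarrow> 'a profile \<Rightarrow> (nat \<Rightarrow> 'a profile) \<Rightarrow> form \<Rightarrow> bool" where
  "sat n T ge S s \<alpha> (C t) = (\<forall>j<n. eval_trm s \<alpha> t j \<in> S j)"
| "sat n T ge S s \<alpha> (Ge i a b c) =
     (((eval_trm s \<alpha> c)(i := eval_trm s \<alpha> a i),
       (eval_trm s \<alpha> c)(i := eval_trm s \<alpha> b i)) \<in> ge i)"
| "sat n T ge S s \<alpha> (Neg f) = (\<not> sat n T ge S s \<alpha> f)"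
| "sat n T ge S s \<alpha> (Conj f g) = (sat n T ge S s \<alpha> f \<and> sat n T ge S s \<alpha> g)"
| "sat n T ge S s \<alpha> (Ex x f) = (\<exists>p\<in>profiles n T. sat n T ge S s (\<alpha>(x := p)) f)"

fun fv_trm :: "trm \<Rightarrow> nat set" where
  "fv_trm (V x) = {x}"
| "fv_trm Oc = {}"

fun fv :: "form \<Rightarrow> nat set" where
  "fv (C t) = fv_trm t"
| "fv (Ge i a b c) = fv_trm a \<union> fv_trm b \<union> fv_trm c"
| "fv (Neg f) = fv f"
| "fv (Conj f g) = fv f \<union> fv g"
| "fv (Ex x f) = fv f - {x}"

definition closed :: "form \<Rightarrow> bool" where
  "closed f \<longleftrightarrow> fv f = {}"

fun only_player :: "nat \<Rightarrow> form \<Rightarrow> bool" where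
  "only_player i (C t) = True"
| "only_player i (Ge j a b c) = (j = i)"
| "only_player i (Neg f) = only_player i f"
| "only_player i (Conj f g) = (only_player i f \<and> only_player i g)"
| "only_player i (Ex x f) = only_player i f"

definition optimality_condition :: "nat \<Rightarrow> form \<Rightarrow> bool" where
  "optimality_condition i f \<longleftrightarrow> closed f \<and> only_player i f"

text \<open>even_pol b f: b is True iff we are currently under an even number of
  negations; every occurrence of C must be under an even number.\<close>
fun even_pol :: "bool \<Rightarrow> form \<Rightarrow> bool" where
  "even_pol b (C t) = b"
| "even_pol b (Ge i a c d) = True"
| "even_pol b (Neg f) = even_pol (\<not> b) f"
| "even_pol b (Conj f g) = (even_pol b f \<and> even_pol b g)"
| "even_pol b (Ex x f) = even_pol b f"

definition positive :: "form \<Rightarrow> bool" where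
  "positive f \<longleftrightarrow> even_pol True f"

definition models :: "nat \<Rightarrow> (nat \<Rightarrow> 'a set) \<Rightarrow> (nat \<Rightarrow> ('a profile \<times> 'a profile) set)
            \<Rightarrow> (nat \<Rightarrow> 'a set) \<Rightarrow> 'a profile \<Rightarrow> form \<Rightarrow> bool" where
  "models n T ge S s f \<longleftrightarrow> (\<forall>\<alpha>. sat n T ge S s \<alpha> f)"

text \<open>phi_i(s_i, S): (G,S,s) \<Turnstile> phi_i for a profile s whose i-th component is s_i.\<close>
definition opt_holds :: "nat \<Rightarrow> (nat \<Rightarrow> 'a set) \<Rightarrow> (nat \<Rightarrow> ('a profile \<times> 'a profile) set)
            \<Rightarrow> (nat \<Rightarrow> form) \<Rightarrow> nat \<Rightarrow> 'a \<Rightarrow> (nat \<Rightarrow> 'a set) \<Rightarrow> bool" where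
  "opt_holds n T ge \<phi> i si S \<longleftrightarrow>
     (\<exists>s\<in>profiles n T. s i = si \<and> models n T ge S s (\<phi> i))"

definition opt_op :: "nat \<Rightarrow> (nat \<Rightarrow> 'a set) \<Rightarrow> (nat \<Rightarrow> ('a profile \<times> 'a profile) set)
            \<Rightarrow> (nat \<Rightarrow> form) \<Rightarrow> (nat \<Rightarrow> 'a set) \<Rightarrow> (nat \<Rightarrow> 'a set)" where
  "opt_op n T ge \<phi> S = (\<lambda>i. {si \<in> S i. opt_holds n T ge \<phi> i si S})"

end

theory Submission
  imports Defs
begin

lemma mono_sat:
  assumes "\<forall>j<n. S j \<subseteq> S' j"
  shows "even_pol b f \<Longrightarrow> (b \<longrightarrow> (sat n T ge S s \<alpha> f \<longrightarrow> sat n T ge S' s \<alpha> f))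
      \<and> (\<not> b \<longrightarrow> (sat n T ge S' s \<alpha> f \<longrightarrow> sat n T ge S s \<alpha> f))"
proof (induction f arbitrary: b \<alpha>)
  case (C t)
  then show ?case using assms by auto
next
  case (Ge x1 x2 x3 x4)
  then show ?case by simp
next
  case (Neg f)
  then show ?case by (cases b) fastforce+
next
  case (Conj f1 f2)
  then show ?case by (cases b) fastforce+
next
  case (Ex x1 f)
  then show ?case by (cases b) fastforce+
qed

theorem mainTheorem7:
  assumes "strategic_game n T ge"
    and "\<forall>i<n. optimality_condition i (\<phi> i) \<and> positive (\<phi> i)"
    and "restriction n T S" and "restriction n T S'"
    and "restr_le n S S'"
  shows "restr_le n (opt_op n T ge \<phi> S) (opt_op n T ge \<phi> S')"
proof -
  have le: "\<forall>j<n. S j \<subseteq> S' j" using assms(5) by (simp add: restr_le_def)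
  have "models n T ge S' s (\<phi> i)" if "i < n" "models n T ge S s (\<phi> i)" for i s
    using mono_sat[OF le, of True "\<phi> i"] assms(2) that
    by (auto simp: models_def positive_def)
  then show ?thesis using le
    unfolding restr_le_def opt_op_def opt_holds_def by blast
qed

end
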